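(* For integers $m\ge1$ let $f_m(x)=\frac{(m-x)^{m-1}}{e^{m-x}(m-1)!}$ for $x\le m$ and $f_m(x)=0$ for $x>m$, and for integers $m\ge2$ and real $z\ge0$ let $b(m,z)$ be the unique real number with $0\le b(m,z)\le z$ and $f_m(1-z)=f_m(1+z-b(m,z))$. There is an absolute constant $C>0$ such that: (i) if $n\ge 20$ and $0\le z\le \frac n{10}$, then $b(n,z)\le \frac z3$ and $\big|b(n,z)-\frac{2z^2}{3(n-1)}\big|\le C\frac{z^3}{n^2}$; (ii) if $n\ge1$ and $|x|\le \frac n3$, then $C^{-1}n^{-1/2}e^{-x^2/n}\le f_n(x)\le C n^{-1/2}e^{-x^2/(3n)}$; (iii) if $x$ is real and $h,H$ are integers with $1\le h\le H\le 10x^2$, then $f_h(x)h^{-2}\le C f_H(x)H^{-2}$; (iv) if $k,n$ are integers with $1\le k\le n$ and $x$ is real, then $f_k(x)\le C (n/k)^{1/2} f_n(x)$.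
   Context: $f_m$ is the density of $X_1+\cdots+X_m$, where the $X_i$ are independent with density $e^{x-1}$ for $x\le 1$ and $0$ for $x>1$. *)

theory Defs
  imports Complex_Main
begin

text \<open>Density of the sum of m i.i.d. variables with density e^(x-1) on x <= 1.\<close>
definition f :: "nat \<Rightarrow> real \<Rightarrow> real" where
  "f m x = (if x \<le> real m then (real m - x) ^ (m - 1) / (exp (real m - x) * fact (m - 1)) else 0)"

definition b :: "nat \<Rightarrow> real \<Rightarrow> real" where
  "b m z = (THE y. 0 \<le> y \<and> y \<le> z \<and> f m (1 - z) = f m (1 + z - y))"

end

theory Submission
  imports Defs
begin


lemma zero_min:
  fixes g g' :: "real \<Rightarrow> real"
  assumes der: "\<And>t. lo < t \<Longrightarrow> t < hi \<Longrightarrow> (g has_real_derivative g' t) (at t)"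
    and neg: "\<And>t. lo < t \<Longrightarrow> t \<le> 0 \<Longrightarrow> g' t \<le> 0"
    and pos: "\<And>t. 0 \<le> t \<Longrightarrow> t < hi \<Longrightarrow> 0 \<le> g' t"
    and v: "lo < v" "v < hi" and z: "lo < 0" "0 < hi"
  shows "g 0 \<le> g v"
proof (cases "0 \<le> v")
  case True
  show ?thesis
  proof (rule DERIV_nonneg_imp_nondecreasing[OF True])
    fix x assume "0 \<le> x" "x \<le> v"
    then show "\<exists>y. (g has_real_derivative y) (at x) \<and> 0 \<le> y"
      using der pos v z by (intro exI[of _ "g' x"]) auto
  qed
next
  case False
  show ?thesis
  proof (rule DERIV_nonpos_imp_nonincreasing[of v 0 g])
    fix x assume "v \<le> x" "x \<le> 0"
    then show "\<exists>y. (g has_real_derivative y) (at x) \<and> y \<le> 0"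
      using der neg v z by (intro exI[of _ "g' x"]) auto
  qed (use False in auto)
qed

lemma ln_le_cubic:
  fixes v :: real assumes "-1 < v"
  shows "ln (1 + v) \<le> v - v^2/2 + v^3/3"
proof -
  let ?g = "\<lambda>v::real. v - v^2/2 + v^3/3 - ln (1 + v)"
  have "?g 0 \<le> ?g v"
  proof (rule zero_min[where g' = "\<lambda>t. t^3 / (1 + t)" and lo = "-1" and hi = "v + 1"])
    fix t :: real assume t: "-1 < t" "t < v + 1"
    show "(?g has_real_derivative t^3/(1+t)) (at t)"
      by (rule derivative_eq_intros refl | (use t in simp; fail))+ (use t in \<open>simp add: field_simps eval_nat_numeral\<close>)
  next
    fix t :: real assume t: "-1 < t" "t \<le> 0"
    then show "t^3/(1+t) \<le> 0" by (simp add: divide_nonpos_pos power_le_zero_eq)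
  next
    fix t :: real assume t: "0 \<le> t" "t < v + 1"
    then show "0 \<le> t^3/(1+t)" by simp
  qed (use assms in auto)
  then show ?thesis by simp
qed

lemma ln_ge_quartic:
  fixes v :: real assumes "0 \<le> v"
  shows "v - v^2/2 + v^3/3 - v^4/4 \<le> ln (1 + v)"
proof -
  let ?g = "\<lambda>v::real. ln (1 + v) - (v - v^2/2 + v^3/3 - v^4/4)"
  have "?g 0 \<le> ?g v"
  proof (rule DERIV_nonneg_imp_nondecreasing[OF assms])
    fix t :: real assume t: "0 \<le> t" "t \<le> v"
    have "(?g has_real_derivative t^4/(1+t)) (at t)"
      by (rule derivative_eq_intros refl | (use t in simp; fail))+ (use t in \<open>simp add: field_simps eval_nat_numeral\<close>)
    moreover have "0 \<le> t^4/(1+t)" using t by simp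
    ultimately show "\<exists>y. (?g has_real_derivative y) (at t) \<and> 0 \<le> y" by blast
  qed
  then show ?thesis by simp
qed

lemma ln_ge_quartic_neg:
  fixes v :: real assumes "-1/2 \<le> v" "v \<le> 0"
  shows "v - v^2/2 + v^3/3 - v^4/2 \<le> ln (1 + v)"
proof -
  let ?g = "\<lambda>v::real. ln (1 + v) - (v - v^2/2 + v^3/3 - v^4/2)"
  have "?g v \<ge> ?g 0"
  proof (rule DERIV_nonpos_imp_nonincreasing[OF assms(2)])
    fix t :: real assume t: "v \<le> t" "t \<le> 0"
    have "(?g has_real_derivative t^3*(1+2*t)/(1+t)) (at t)"
      by (rule derivative_eq_intros refl | (use t assms in simp; fail))+ (use t assms in \<open>simp add: field_simps eval_nat_numeral\<close>)
    moreover have "t^3*(1+2*t)/(1+t) \<le> 0" using t assms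
      by (intro divide_nonpos_pos mult_nonpos_nonneg) (auto simp: power_le_zero_eq)
    ultimately show "\<exists>y. (?g has_real_derivative y) (at t) \<and> y \<le> 0" by blast
  qed
  then show ?thesis by simp
qed

lemma ln_le_quad3:
  fixes v :: real assumes "-1 < v" "v < 1/2"
  shows "ln (1 + v) \<le> v - v^2/3"
proof -
  let ?g = "\<lambda>v::real. v - v^2/3 - ln (1 + v)"
  have "?g 0 \<le> ?g v"
  proof (rule zero_min[where g' = "\<lambda>t. t*(1-2*t)/(3*(1 + t))" and lo = "-1" and hi = "1/2"])
    fix t :: real assume t: "-1 < t" "t < 1/2"
    show "(?g has_real_derivative t*(1-2*t)/(3*(1 + t))) (at t)"
      by (rule derivative_eq_intros refl | (use t in simp; fail))+ (use t in \<open>simp add: field_simps eval_nat_numeral\<close>)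
  next
    fix t :: real assume t: "-1 < t" "t \<le> 0"
    then show "t*(1-2*t)/(3*(1 + t)) \<le> 0" by (intro divide_nonpos_pos mult_nonpos_nonneg) auto
  next
    fix t :: real assume t: "0 \<le> t" "t < 1/2"
    then show "0 \<le> t*(1-2*t)/(3*(1 + t))" by simp
  qed (use assms in auto)
  then show ?thesis by simp
qed

lemma ln_ge_quad:
  fixes v :: real assumes "-1/2 < v"
  shows "v - v^2 \<le> ln (1 + v)"
proof -
  let ?g = "\<lambda>v::real. ln (1 + v) - (v - v^2)"
  have "?g 0 \<le> ?g v"
  proof (rule zero_min[where g' = "\<lambda>t. t*(1+2*t)/(1 + t)" and lo = "-1/2" and hi = "v+1"])
    fix t :: real assume t: "-1/2 < t" "t < v+1"
    show "(?g has_real_derivative t*(1+2*t)/(1 + t)) (at t)"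
      by (rule derivative_eq_intros refl | (use t in simp; fail))+ (use t in \<open>simp add: field_simps eval_nat_numeral\<close>)
  next
    fix t :: real assume t: "-1/2 < t" "t \<le> 0"
    then show "t*(1+2*t)/(1 + t) \<le> 0" by (intro divide_nonpos_pos mult_nonpos_nonneg) auto
  next
    fix t :: real assume t: "0 \<le> t" "t < v+1"
    then show "0 \<le> t*(1+2*t)/(1 + t)" by simp
  qed (use assms in auto)
  then show ?thesis by simp
qed

lemma ln_ge_pade:
  fixes v :: real assumes "0 \<le> v"
  shows "2*v/(2+v) \<le> ln (1 + v)"
proof -
  let ?g = "\<lambda>v::real. ln (1 + v) - 2*v/(2+v)"
  have "?g 0 \<le> ?g v"
  proof (rule DERIV_nonneg_imp_nondecreasing[OF assms])
    fix t :: real assume t: "0 \<le> t" "t \<le> v"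
    have "(?g has_real_derivative (1/(1+t) - 4/(2+t)^2)) (at t)"
      by (rule derivative_eq_intros refl | (use t in simp; fail))+ (use t in \<open>simp add: field_simps power2_eq_square\<close>)
    moreover have "0 \<le> 1/(1+t) - 4/(2+t)^2"
    proof -
      have "4 * (1 + t) \<le> (2+t)^2" using t by (simp add: power2_eq_square algebra_simps)
      then have "4/(2+t)^2 \<le> 1/(1+t)" using t by (simp add: field_simps)
      then show ?thesis by simp
    qed
    ultimately show "\<exists>y. (?g has_real_derivative y) (at t) \<and> 0 \<le> y" by blast
  qed
  then show ?thesis by simp
qed



lemma stirling_step:
  fixes m :: nat assumes "1 \<le> m"
  shows "1 \<le> (real m + 1/2) * (ln (real m + 1) - ln (real m))"
    and "(real m + 1/2) * (ln (real m + 1) - ln (real m)) \<le> 1 + 1/(2*real m*(real m + 1))"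
proof -
  have m: "(1::real) \<le> real m" using assms by simp
  have e1: "1 + 1/real m = (real m + 1)/real m" using m by (simp add: field_simps)
  have e: "ln (real m + 1) - ln (real m) = ln (1 + 1/real m)"
    unfolding e1 using m by (simp add: ln_div)
  have a: "2*(1/real m)/(2 + 1/real m) \<le> ln (1 + 1/real m)" by (rule ln_ge_pade) simp
  have b: "ln (1 + 1/real m) \<le> 1/real m - (1/real m)^2/2 + (1/real m)^3/3"
    by (rule ln_le_cubic) (use m in \<open>simp add: less_le_trans[of _ 0]\<close>)
  have "(real m + 1/2) * (2*(1/real m)/(2 + 1/real m)) = 1" using m by (simp add: field_simps)
  moreover have "(real m + 1/2) * (2*(1/real m)/(2 + 1/real m)) \<le> (real m + 1/2) * ln (1 + 1/real m)"
    using a m by (intro mult_left_mono) auto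
  ultimately show "1 \<le> (real m + 1/2) * (ln (real m + 1) - ln (real m))" using e by simp
  have "(real m + 1/2) * ln (1 + 1/real m) \<le> (real m + 1/2) * (1/real m - (1/real m)^2/2 + (1/real m)^3/3)"
    using b m by (intro mult_left_mono) auto
  also have "\<dots> = 1 + 1/(12*real m^2) + 1/(6*real m^3)" using m by (simp add: field_simps eval_nat_numeral)
  also have "\<dots> \<le> 1 + 1/(2*real m*(real m + 1))"
  proof -
    have "1/(6*real m^3) \<le> 1/(6*real m^2)" using m
      by (intro divide_left_mono mult_left_mono) (auto simp: power_increasing)
    moreover have "1/(12*real m^2) + 1/(6*real m^2) = 1/(4*real m^2)" using m by (simp add: field_simps)
    moreover have "1/(4*real m^2) \<le> 1/(2*real m*(real m + 1))" using m
      by (intro divide_left_mono) (auto simp: power2_eq_square)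
    ultimately show ?thesis by linarith
  qed
  finally show "(real m + 1/2) * (ln (real m + 1) - ln (real m)) \<le> 1 + 1/(2*real m*(real m + 1))"
    using e by simp
qed

lemma ln_fact_Suc: "ln (fact (Suc m) :: real) = ln (real m + 1) + ln (fact m)"
  by (simp add: ln_mult add.commute)

lemma stirling_bounds:
  fixes m :: nat assumes "1 \<le> m"
  shows "ln (fact m :: real) \<le> 1 + (real m + 1/2) * ln (real m) - real m"
    and "(real m + 1/2) * ln (real m) - real m + 1/2 + 1/(2*real m) \<le> ln (fact m :: real)"
  using assms
proof (induction m rule: nat_induct_at_least)
  case base
  { case 1 show ?case by simp }
  { case 2 show ?case by simp }
next
  case (Suc m)
  note s = stirling_step[OF Suc.hyps]
  have r: "real (Suc m) = real m + 1" by simp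
  { case 1
    have "ln (fact (Suc m) :: real) = ln (real m + 1) + ln (fact m)" by (rule ln_fact_Suc)
    also have "\<dots> \<le> ln (real m + 1) + (1 + (real m + 1/2) * ln (real m) - real m)" using Suc.IH(1) by simp
    also have "\<dots> \<le> 1 + (real m + 1 + 1/2) * ln (real m + 1) - (real m + 1)"
      using s(1) by (simp add: algebra_simps)
    finally show ?case by (simp only: r)
  }
  { case 2
    have "(real m + 1 + 1/2) * ln (real m + 1) - (real m + 1) + 1/2 + 1/(2*(real m + 1))
        \<le> ln (real m + 1) + ((real m + 1/2) * ln (real m) - real m + 1/2 + 1/(2*real m))"
    proof -
      have "1/(2*real m) - 1/(2*(real m + 1)) = 1/(2*real m*(real m + 1))" using Suc.hyps by (simp add: field_simps)
      then show ?thesis using s(2) by (simp add: algebra_simps)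
    qed
    also have "\<dots> \<le> ln (real m + 1) + ln (fact m)" using Suc.IH(2) by simp
    also have "\<dots> = ln (fact (Suc m))" by (rule ln_fact_Suc[symmetric])
    finally show ?case by (simp only: r)
  }
qed

definition Am :: "nat \<Rightarrow> real" where
  "Am m = real m ^ m * exp (- real m) / fact m"

lemma Am_pos: "0 < Am m"
  by (cases "m = 0") (auto simp: Am_def)

lemma Am_exp: "1 \<le> m \<Longrightarrow> Am m = exp (real m * ln (real m) - real m - ln (fact m))"
proof -
  assume m: "1 \<le> m"
  have a: "exp (real m * ln (real m)) = real m ^ m" using m by (simp add: exp_of_nat_mult)
  have b: "exp (ln (fact m)) = (fact m :: real)" by simp
  have "exp (real m * ln (real m) - real m - ln (fact m)) = exp (real m * ln (real m)) * exp (- real m) / exp (ln (fact m))"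
    by (simp add: exp_diff exp_minus exp_add field_simps)
  then show ?thesis unfolding a b Am_def by simp
qed

lemma Am_bounds1:
  fixes m :: nat assumes "1 \<le> m"
  shows "exp (-1) / sqrt (real m) \<le> Am m" and "Am m \<le> 1 / sqrt (real m)"
proof -
  have m: "0 < real m" using assms by simp
  have sq: "exp (ln (real m) / 2) = sqrt (real m)" using m by (simp add: ln_sqrt[symmetric])
  note sb = stirling_bounds[OF assms]
  have "exp (-1) / sqrt (real m) = exp (-1 - ln (real m)/2)" by (simp add: exp_diff sq)
  also have "\<dots> \<le> exp (real m * ln (real m) - real m - ln (fact m))"
  proof -
    have q: "(real m + 1/2) * ln (real m) = real m * ln (real m) + ln (real m)/2" by (simp add: algebra_simps)
    show ?thesis using sb(1) q by simp
  qed
  finally show "exp (-1) / sqrt (real m) \<le> Am m" using Am_exp[OF assms] by simp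
  have q: "(real m + 1/2) * ln (real m) = real m * ln (real m) + ln (real m)/2" by (simp add: algebra_simps)
  have q2: "0 \<le> 1/(2*real m)" by simp
  have "real m * ln (real m) - real m - ln (fact m) \<le> - (ln (real m)/2)"
    using sb(2) q q2 by linarith
  then have "exp (real m * ln (real m) - real m - ln (fact m)) \<le> exp (- (ln (real m)/2))"
    by simp
  also have "\<dots> = 1 / sqrt (real m)" by (simp add: exp_minus sq inverse_eq_divide)
  finally show "Am m \<le> 1 / sqrt (real m)" using Am_exp[OF assms] by simp
qed

lemma Am_bounds:
  fixes m :: nat
  shows "exp (-1) / sqrt (real m + 1) \<le> Am m" and "Am m \<le> sqrt 2 / sqrt (real m + 1)"
proof -
  show "exp (-1) / sqrt (real m + 1) \<le> Am m"
  proof (cases "m = 0")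
    case True
    have "exp (-1::real) \<le> 1" by simp
    then show ?thesis using True by (simp add: Am_def)
  next
    case False
    then have "exp (-1) / sqrt (real m + 1) \<le> exp (-1) / sqrt (real m)"
      by (intro divide_left_mono) auto
    then show ?thesis using Am_bounds1(1)[of m] False by simp
  qed
  show "Am m \<le> sqrt 2 / sqrt (real m + 1)"
  proof (cases "m = 0")
    case True
    have "(1::real) \<le> sqrt 2" by simp
    then show ?thesis using True by (simp add: Am_def)
  next
    case False
    have "sqrt (real m + 1) \<le> sqrt 2 * sqrt (real m)" 
      unfolding real_sqrt_mult[symmetric] using False by simp
    then have "1 / sqrt (real m) \<le> sqrt 2 / sqrt (real m + 1)" using False
      by (simp add: field_simps)
    then show ?thesis using Am_bounds1(2)[of m] False by simp
  qed
qed



definition Lm :: "nat \<Rightarrow> real \<Rightarrow> real" where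
  "Lm m s = real m * ln (real m + s) - real m * ln (real m) - s"

lemma Lm_0 [simp]: "Lm m 0 = 0" by (simp add: Lm_def)
lemma Lm_zero_m: "Lm 0 s = - s" by (simp add: Lm_def)

lemma f_nonneg: "0 \<le> f n x"
  by (simp add: f_def)

lemma f_zero: "real n < x \<or> (x = real n \<and> 2 \<le> n) \<Longrightarrow> f n x = 0"
  by (auto simp: f_def)

lemma f_rep:
  assumes n: "1 \<le> n" and x: "x < real n \<or> (n = 1 \<and> x \<le> 1)"
  shows "f n x = Am (n - 1) * exp (Lm (n - 1) (1 - x))"
proof (cases "n = 1")
  case True
  then have "x \<le> 1" using x by auto
  then show ?thesis using True by (simp add: f_def Am_def Lm_def exp_minus field_simps mult_exp_exp)
next
  case False
  define m where "m = n - 1"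
  have m1: "1 \<le> m" using False n by (simp add: m_def)
  have rm: "real n = real m + 1" using n by (simp add: m_def)
  have xl: "x < real n" using x False by auto
  have y: "0 < real n - x" using xl by simp
  have "f n x = (real n - x) ^ m / (exp (real n - x) * fact m)"
    using xl by (simp add: f_def m_def)
  also have "\<dots> = exp (real m * ln (real n - x) - (real n - x)) / fact m"
    using y by (simp add: exp_diff exp_of_nat_mult[symmetric] ln_realpow[symmetric])
  also have "\<dots> = Am m * exp (Lm m (1 - x))"
  proof -
    have "real m * ln (real n - x) - (real n - x) = (real m * ln (real m) - real m) + Lm m (1 - x)"
      unfolding Lm_def rm by (simp add: algebra_simps)
    then have "exp (real m * ln (real n - x) - (real n - x)) = exp (real m * ln (real m) - real m) * exp (Lm m (1 - x))"
      by (simp add: exp_add)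
    moreover have "Am m = exp (real m * ln (real m) - real m) / fact m"
      using m1 by (simp add: Am_def exp_diff exp_of_nat_mult[symmetric] ln_realpow[symmetric] exp_minus field_simps)
    ultimately show ?thesis by simp
  qed
  finally show ?thesis by (simp add: m_def)
qed

lemma Lm_deriv:
  assumes "0 < real a + r"
  shows "((\<lambda>r. Lm a r) has_real_derivative (real a / (real a + r) - 1)) (at r)"
  unfolding Lm_def
  by (rule derivative_eq_intros refl | (use assms in simp; fail))+

lemma Lm_cont:
  assumes "a = 0 \<or> 0 < real a + lo"
  shows "continuous_on {lo..hi} (\<lambda>r. Lm a r)"
proof (cases "a = 0")
  case True
  then show ?thesis by (simp add: Lm_zero_m continuous_intros)
next
  case False
  then have "\<forall>r\<in>{lo..hi}. 0 < real a + r" using assms by auto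
  then show ?thesis unfolding Lm_def by (intro continuous_intros) auto
qed

lemma aux_cancel: "(P::real) \<noteq> 0 \<Longrightarrow> x / (2 * P) * (2 * r) = r * x / P"
  by (simp add: field_simps)

lemma P1:
  assumes ac: "a \<le> c" and c: "1 \<le> c" and s: "0 \<le> s"
  shows "(real c - real a) * s^2 / (2 * (real c + s) * (real a + s)) \<le> Lm c s - Lm a s"
proof (cases "s = 0")
  case True then show ?thesis by simp
next
  case False
  with s have s: "0 < s" by simp
  define K where "K = (real c - real a) / (2 * (real c + s) * (real a + s))"
  let ?G = "\<lambda>r. Lm c r - Lm a r - K * r^2"
  have "?G 0 \<le> ?G s"
  proof (rule DERIV_nonneg_imp_increasing_open[of 0 s ?G])
    fix r assume r: "0 < r" "r < s"
    have cr: "0 < real c + r" "0 < real a + r" using r c by auto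
    have "(?G has_real_derivative ((real c / (real c + r) - 1) - (real a / (real a + r) - 1) - K * (2 * r))) (at r)"
    proof -
      have d3: "((\<lambda>r. K * r^2) has_real_derivative K * (2 * r)) (at r)"
        by (auto intro!: derivative_eq_intros)
      show ?thesis by (rule DERIV_diff[OF DERIV_diff[OF Lm_deriv[OF cr(1)] Lm_deriv[OF cr(2)]] d3])
    qed
    moreover have "0 \<le> (real c / (real c + r) - 1) - (real a / (real a + r) - 1) - K * (2 * r)"
    proof -
      have "(real c + r) * (real a + r) \<le> (real c + s) * (real a + s)"
        using r cr by (intro mult_mono) auto
      then have "r * (real c - real a) / ((real c + s) * (real a + s)) \<le> r * (real c - real a) / ((real c + r) * (real a + r))"
        using r cr ac by (intro divide_left_mono mult_nonneg_nonneg mult_pos_pos) auto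
      moreover have "K * (2*r) = r * (real c - real a) / ((real c + s) * (real a + s))"
      proof -
        have "0 < real c + s" "0 < real a + s" using s by auto
        then have "(real c + s) * (real a + s) \<noteq> 0" by simp
        from aux_cancel[OF this, of "real c - real a" r] show ?thesis unfolding K_def by (simp only: mult.assoc)
      qed
      moreover have "(real c / (real c + r) - 1) - (real a / (real a + r) - 1) = r * (real c - real a) / ((real c + r) * (real a + r))"
        using cr by (simp add: field_simps)
      ultimately show ?thesis by linarith
    qed
    ultimately show "\<exists>y. (?G has_real_derivative y) (at r) \<and> 0 \<le> y" by blast
  next
    have "continuous_on {0..s} (\<lambda>r. Lm c r)" using c by (intro Lm_cont) auto
    moreover have "continuous_on {0..s} (\<lambda>r. Lm a r)" by (intro Lm_cont) auto
    ultimately show "continuous_on {0..s} ?G" by (intro continuous_intros)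
  qed (use s in auto)
  then show ?thesis by (simp add: K_def)
qed

lemma P2:
  assumes ac: "a \<le> c" and a: "1 \<le> a" and s: "s \<le> 0" "- real a < s"
  shows "(real c - real a) * s^2 / (2 * real a * real c) \<le> Lm c s - Lm a s"
proof -
  define K where "K = (real c - real a) / (2 * real a * real c)"
  let ?G = "\<lambda>r. Lm c r - Lm a r - K * r^2"
  have "?G s \<ge> ?G 0"
  proof (rule DERIV_nonpos_imp_nonincreasing[of s 0 ?G, OF s(1)])
    fix r assume r: "s \<le> r" "r \<le> 0"
    have cr: "0 < real c + r" "0 < real a + r" using r s ac by auto
    have "(?G has_real_derivative ((real c / (real c + r) - 1) - (real a / (real a + r) - 1) - K * (2 * r))) (at r)"
    proof -
      have d3: "((\<lambda>r. K * r^2) has_real_derivative K * (2 * r)) (at r)"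
        by (auto intro!: derivative_eq_intros)
      show ?thesis by (rule DERIV_diff[OF DERIV_diff[OF Lm_deriv[OF cr(1)] Lm_deriv[OF cr(2)]] d3])
    qed
    moreover have "(real c / (real c + r) - 1) - (real a / (real a + r) - 1) - K * (2 * r) \<le> 0"
    proof -
      have "(real c + r) * (real a + r) \<le> real c * real a"
        using r cr by (intro mult_mono) auto
      then have "(-r) * (real c - real a) / (real c * real a) \<le> (-r) * (real c - real a) / ((real c + r) * (real a + r))"
        using r cr ac by (intro divide_left_mono mult_nonneg_nonneg mult_pos_pos) auto
      moreover have "K * (2*r) = r * (real c - real a) / (real c * real a)"
        unfolding K_def using a ac by (simp add: field_simps)
      moreover have "(real c / (real c + r) - 1) - (real a / (real a + r) - 1) = r * (real c - real a) / ((real c + r) * (real a + r))"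
        using cr by (simp add: field_simps)
      ultimately show ?thesis by (simp add: minus_divide_left[symmetric]) 
    qed
    ultimately show "\<exists>y. (?G has_real_derivative y) (at r) \<and> y \<le> 0" by blast
  qed
  then show ?thesis by (simp add: K_def)
qed

lemma D0:
  assumes ac: "a \<le> c" and c: "1 \<le> c" and s: "0 \<le> s \<or> - real a < s"
  shows "Lm a s \<le> Lm c s"
proof (cases "0 \<le> s")
  case True
  have "0 \<le> (real c - real a) * s^2 / (2 * (real c + s) * (real a + s))"
    using True ac by simp
  then show ?thesis using P1[OF ac c True] by linarith
next
  case False
  then have s': "s \<le> 0" "- real a < s" using s by auto
  then have "1 \<le> a" by (cases a) auto
  have "0 \<le> (real c - real a) * s^2 / (2 * real a * real c)"
    using ac by simp
  then show ?thesis using P2[OF ac \<open>1 \<le> a\<close> s'] by linarith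
qed



lemma rep_or_zero:
  assumes "1 \<le> h"
  shows "(x < real h \<or> (h = 1 \<and> x \<le> 1)) \<or> f h x = 0"
proof (cases "x < real h \<or> (h = 1 \<and> x \<le> 1)")
  case False
  then have "real h < x \<or> (x = real h \<and> 2 \<le> h)" using assms by auto
  then show ?thesis using f_zero by blast
qed simp

lemma ratio_rep:
  assumes h: "1 \<le> h" "h < H" and x: "x < real h \<or> (h = 1 \<and> x \<le> 1)"
  shows "f h x = (Am (h-1) / Am (H-1)) * exp (- (Lm (H-1) (1-x) - Lm (h-1) (1-x))) * f H x"
    and "Am (h-1) / Am (H-1) \<le> exp 1 * sqrt 2 * sqrt (real H / real h)"
    and "0 \<le> Lm (H-1) (1-x) - Lm (h-1) (1-x)"
proof -
  have xH: "x < real H \<or> (H = 1 \<and> x \<le> 1)" using x h by auto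
  have fh: "f h x = Am (h-1) * exp (Lm (h-1) (1-x))" by (rule f_rep[OF h(1) x])
  have fH: "f H x = Am (H-1) * exp (Lm (H-1) (1-x))" by (rule f_rep[OF _ xH]) (use h in auto)
  have "exp (Lm (h-1) (1-x)) = exp (- (Lm (H-1) (1-x) - Lm (h-1) (1-x))) * exp (Lm (H-1) (1-x))"
    by (simp add: exp_add[symmetric])
  then show "f h x = (Am (h-1) / Am (H-1)) * exp (- (Lm (H-1) (1-x) - Lm (h-1) (1-x))) * f H x"
    unfolding fh fH using Am_pos[of "H-1"] by (simp add: field_simps)
  have rh: "real (h-1) + 1 = real h" "real (H-1) + 1 = real H" using h by auto
  have A1: "Am (h-1) \<le> sqrt 2 / sqrt (real h)" using Am_bounds(2)[of "h-1"] rh by simp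
  have A2: "exp (-1) / sqrt (real H) \<le> Am (H-1)" using Am_bounds(1)[of "H-1"] rh by simp
  have hp: "0 < sqrt (real h)" "0 < sqrt (real H)" using h by auto
  have "Am (h-1) / Am (H-1) \<le> (sqrt 2 / sqrt (real h)) / (exp (-1) / sqrt (real H))"
    using A1 A2 Am_pos[of "h-1"] hp by (intro frac_le) auto
  also have "\<dots> = exp 1 * sqrt 2 * sqrt (real H / real h)"
    using hp by (simp add: exp_minus real_sqrt_divide field_simps)
  finally show "Am (h-1) / Am (H-1) \<le> exp 1 * sqrt 2 * sqrt (real H / real h)" .
  show "0 \<le> Lm (H-1) (1-x) - Lm (h-1) (1-x)"
    using D0[of "h-1" "H-1" "1-x"] h x by auto
qed

lemma e_sqrt2: "exp 1 * sqrt 2 \<le> (9/2::real)"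
proof -
  have "exp (1::real) \<le> 3" using exp_le by simp
  moreover have "sqrt (2::real) \<le> 3/2" by (rule real_le_lsqrt) (auto simp: power2_eq_square)
  ultimately have "exp 1 * sqrt 2 \<le> 3 * (3/2::real)" by (intro mult_mono) auto
  then show ?thesis by simp
qed

lemma pow_exp: "0 \<le> w \<Longrightarrow> 0 < n \<Longrightarrow> (w / real n) ^ n \<le> exp w"
proof -
  assume w: "0 \<le> w" and n: "0 < n"
  have "(w / real n) ^ n \<le> (1 + w / real n) ^ n" using w by (intro power_mono) auto
  also have "\<dots> \<le> exp w" by (rule exp_ge_one_plus_x_over_n_power_n) (use w n in auto)
  finally show ?thesis .
qed

lemma le_exp_cancel:
  fixes y K D :: real
  assumes "y \<le> K * exp D" shows "y * exp (- D) \<le> K"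
proof -
  have "y * exp (- D) \<le> (K * exp D) * exp (- D)" using assms by (rule mult_right_mono) simp
  also have "(K * exp D) * exp (- D) = K" by (simp add: mult.assoc mult_exp_exp)
  finally show ?thesis .
qed

lemma gamma_case:
  fixes r D :: real
  assumes r: "1 \<le> r" and D: "r / 160 \<le> D"
  shows "r^3 * exp (- D) \<le> 480^3"
proof -
  have "(r/160 / real (3::nat))^3 \<le> exp (r/160)" by (rule pow_exp) (use r in auto)
  then have "r^3 \<le> 480^3 * exp (r/160)" by (simp add: power_divide field_simps)
  also have "\<dots> \<le> 480^3 * exp D" using D by simp
  finally show ?thesis by (rule le_exp_cancel)
qed

lemma delta_case:
  fixes X r D :: real
  assumes X: "0 \<le> X" and r: "0 \<le> r" "r \<le> 10 * X^2" and D: "X / 16 \<le> D"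
  shows "r^3 * exp (- D) \<le> 1000 * 96^6"
proof -
  have "(X/16 / real (6::nat))^6 \<le> exp (X/16)" by (rule pow_exp) (use X in auto)
  then have "X^6 \<le> 96^6 * exp (X/16)" by (simp add: power_divide field_simps)
  also have "\<dots> \<le> 96^6 * exp D" using D by simp
  finally have x6: "X^6 \<le> 96^6 * exp D" .
  have "r^3 \<le> (10 * X^2)^3" using r by (intro power_mono) auto
  also have "\<dots> = 1000 * X^6" by (simp add: power_mult_distrib power_mult[symmetric])
  also have "\<dots> \<le> 1000 * (96^6 * exp D)" using x6 by simp
  finally have "r^3 \<le> (1000 * 96^6) * exp D" by simp
  then show ?thesis by (rule le_exp_cancel)
qed

lemma key_iii:
  assumes h: "1 \<le> h" "h < H" and Hx: "real H \<le> 10 * x^2"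
    and x: "x < real h \<or> (h = 1 \<and> x \<le> 1)"
  shows "(real H / real h)^3 * exp (- (Lm (H-1) (1-x) - Lm (h-1) (1-x))) \<le> 2 * 10^15"
proof -
  define D where "D = Lm (H-1) (1-x) - Lm (h-1) (1-x)"
  define r where "r = real H / real h"
  have D0: "0 \<le> D" unfolding D_def by (rule ratio_rep(3)[OF h x])
  have hp: "0 < real h" using h by simp
  have r1: "1 \<le> r" unfolding r_def using h by simp
  have rH: "r \<le> real H" unfolding r_def using h by (simp add: field_simps)
  have ra: "real (h-1) = real h - 1" "real (H-1) = real H - 1" using h by auto
  consider "real H < 2 * real h" | "real H < 40" | "2 * real h \<le> real H" "40 \<le> real H" by linarith
  then have "r^3 * exp (- D) \<le> 2 * 10^15"
  proof cases
    case 1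
    have "r < 2" unfolding r_def using 1 hp by (simp add: field_simps)
    then have "r^3 \<le> 2^3" using r1 by (intro power_mono) auto
    moreover have "exp (-D) \<le> 1" using D0 by simp
    ultimately have "r^3 * exp (-D) \<le> 2^3 * 1" using r1 by (intro mult_mono) auto
    then show ?thesis by simp
  next
    case 2
    have "r^3 \<le> 40^3" using r1 rH 2 by (intro power_mono) auto
    moreover have "exp (-D) \<le> 1" using D0 by simp
    ultimately have "r^3 * exp (-D) \<le> 40^3 * 1" using r1 by (intro mult_mono) auto
    then show ?thesis by simp
  next
    case 3
    have x4: "4 \<le> x^2" using 3 Hx by simp
    have dH: "real H / 2 \<le> real (H-1) - real (h-1)" using 3 ra by simp
    have "x \<ge> 2 \<or> x \<le> -2"
    proof (rule ccontr)
      assume "\<not> ?thesis"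
      then have "0 < (2 - x) * (2 + x)" by (intro mult_pos_pos) auto
      then show False using x4 by (simp add: algebra_simps power2_eq_square)
    qed
    then consider "2 \<le> x" | "x \<le> -2" by blast
    then show ?thesis
    proof cases
      case 1
      have xh: "x < real h" using x 1 by auto
      have a1: "1 \<le> h - 1" using xh 1 by simp
      have s: "1 - x \<le> 0" "- real (h-1) < 1 - x" using 1 xh ra by auto
      have P: "(real (H-1) - real (h-1)) * (1-x)^2 / (2 * real (h-1) * real (H-1)) \<le> D"
        unfolding D_def by (rule P2[OF _ a1 s]) (use h in auto)
      have "x^2/4 \<le> (1-x)^2"
      proof -
        have "x/2 \<le> x - 1" using 1 by simp
        then have "(x/2)^2 \<le> (x-1)^2" using 1 by (intro power_mono) auto
        then show ?thesis by (simp add: power2_eq_square algebra_simps)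
      qed
      then have s2: "real H / 40 \<le> (1-x)^2" using Hx by simp
      have "(real H / 2) * (real H / 40) / (2 * real h * real H) \<le> (real (H-1) - real (h-1)) * (1-x)^2 / (2 * real (h-1) * real (H-1))"
      proof (rule frac_le)
        show "(real H / 2) * (real H / 40) \<le> (real (H-1) - real (h-1)) * (1-x)^2"
          using dH s2 by (intro mult_mono) auto
        show "0 < 2 * real (h-1) * real (H-1)" using a1 h by auto
        show "2 * real (h-1) * real (H-1) \<le> 2 * real h * real H" using ra a1 h
          by (intro mult_mono) auto
      qed (use dH in auto)
      moreover have "(real H / 2) * (real H / 40) / (2 * real h * real H) = r / 160"
        unfolding r_def using hp h by (simp add: field_simps)
      ultimately have "r / 160 \<le> D" using P by (metis order_trans)
      then have "r^3 * exp (-D) \<le> 480^3" by (rule gamma_case[OF r1])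
      then show ?thesis by simp
    next
      case 2
      define X where "X = - x"
      have X2: "2 \<le> X" using 2 by (simp add: X_def)
      have s: "0 \<le> 1 - x" using 2 by simp
      have P: "(real (H-1) - real (h-1)) * (1-x)^2 / (2 * (real (H-1) + (1-x)) * (real (h-1) + (1-x))) \<le> D"
        unfolding D_def by (rule P1[OF _ _ s]) (use h in auto)
      have e1: "real (H-1) + (1-x) = real H + X" "real (h-1) + (1-x) = real h + X" using ra by (auto simp: X_def)
      have sX: "X^2 \<le> (1-x)^2" using X2 by (intro power_mono) (auto simp: X_def)
      have num: "(real H / 2) * X^2 \<le> (real (H-1) - real (h-1)) * (1-x)^2"
        using dH sX by (intro mult_mono) auto
      have xX: "x^2 = X^2" by (simp add: X_def)
      have dpos: "0 < 2 * (real H + X) * (real h + X)" using X2 hp by auto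
      consider "X \<le> real h" | "real h < X" "X \<le> real H" | "real H < X" by linarith
      then show ?thesis
      proof cases
        case 1
        have "(real H / 2) * X^2 / (2 * (2 * real H) * (2 * real h)) \<le> (real (H-1) - real (h-1)) * (1-x)^2 / (2 * (real (H-1) + (1-x)) * (real (h-1) + (1-x)))"
          unfolding e1
        proof (rule frac_le)
          show "2 * (real H + X) * (real h + X) \<le> 2 * (2 * real H) * (2 * real h)"
            using 1 h X2 by (intro mult_mono) auto
        qed (use num[unfolded e1] dpos X2 h in auto)
        moreover have "(real H / 2) * X^2 / (2 * (2 * real H) * (2 * real h)) = X^2 / (16 * real h)"
          using hp h by (simp add: field_simps)
        moreover have "r / 160 \<le> X^2 / (16 * real h)"
          unfolding r_def using Hx xX hp by (simp add: field_simps)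
        ultimately have "r / 160 \<le> D" using P by (metis order_trans)
        then have "r^3 * exp (-D) \<le> 480^3" by (rule gamma_case[OF r1])
        then show ?thesis by simp
      next
        case 2
        have "(real H / 2) * X^2 / (2 * (2 * real H) * (2 * X)) \<le> (real (H-1) - real (h-1)) * (1-x)^2 / (2 * (real (H-1) + (1-x)) * (real (h-1) + (1-x)))"
          unfolding e1
        proof (rule frac_le)
          show "2 * (real H + X) * (real h + X) \<le> 2 * (2 * real H) * (2 * X)"
            using 2 h X2 by (intro mult_mono) auto
        qed (use num[unfolded e1] dpos X2 h in auto)
        moreover have "(real H / 2) * X^2 / (2 * (2 * real H) * (2 * X)) = X / 16"
          using hp h X2 by (simp add: field_simps power2_eq_square)
        ultimately have "X / 16 \<le> D" using P by (metis order_trans)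
        moreover have "r \<le> 10 * X^2" using rH Hx xX by simp
        ultimately have "r^3 * exp (-D) \<le> 1000 * 96^6"
          using delta_case[of X r D] X2 r1 by simp
        then show ?thesis by simp
      next
        case 3
        have "(real H / 2) * X^2 / (2 * (2 * X) * (2 * X)) \<le> (real (H-1) - real (h-1)) * (1-x)^2 / (2 * (real (H-1) + (1-x)) * (real (h-1) + (1-x)))"
          unfolding e1
        proof (rule frac_le)
          show "2 * (real H + X) * (real h + X) \<le> 2 * (2 * X) * (2 * X)"
            using 3 h X2 by (intro mult_mono) auto
        qed (use num[unfolded e1] dpos X2 h in auto)
        moreover have "(real H / 2) * X^2 / (2 * (2 * X) * (2 * X)) = real H / 16"
          using X2 by (simp add: field_simps power2_eq_square)
        moreover have "r / 160 \<le> real H / 16" using rH r1 by simp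
        ultimately have "r / 160 \<le> D" using P by (metis order_trans)
        then have "r^3 * exp (-D) \<le> 480^3" by (rule gamma_case[OF r1])
        then show ?thesis by simp
      qed
    qed
  qed
  then show ?thesis by (simp add: r_def D_def)
qed



lemma part_iv:
  assumes k: "1 \<le> k" "k \<le> n"
  shows "f k x \<le> 5 * sqrt (real n / real k) * f n x"
proof -
  have fn: "0 \<le> f n x" by (rule f_nonneg)
  have sq1: "1 \<le> sqrt (real n / real k)" using k by simp
  show ?thesis
  proof (cases "k = n")
    case True
    then show ?thesis using fn k by auto
  next
    case False
    then have kn: "k < n" using k by simp
    from rep_or_zero[OF k(1), of x] show ?thesis
    proof
      assume x: "x < real k \<or> (k = 1 \<and> x \<le> 1)"
      note R = ratio_rep[OF k(1) kn x]
      define D where "D = Lm (n-1) (1-x) - Lm (k-1) (1-x)"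
      have "exp (-D) \<le> 1" using R(3) by (simp add: D_def)
      have "f k x = (Am (k-1) / Am (n-1)) * exp (-D) * f n x" using R(1) by (simp add: D_def)
      also have "\<dots> \<le> (exp 1 * sqrt 2 * sqrt (real n / real k)) * 1 * f n x"
        using R(2) \<open>exp (-D) \<le> 1\<close> fn Am_pos[of "k-1"] Am_pos[of "n-1"]
        by (intro mult_mono) auto
      also have "\<dots> \<le> 5 * sqrt (real n / real k) * f n x"
        using e_sqrt2 fn sq1 by (intro mult_right_mono) auto
      finally show ?thesis .
    next
      assume "f k x = 0" then show ?thesis using fn by simp
    qed
  qed
qed

lemma part_iii:
  assumes h: "1 \<le> h" "h \<le> H" and Hx: "real H \<le> 10 * x^2"
  shows "f h x / (real h)^2 \<le> 10^16 * f H x / (real H)^2"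
proof -
  have fH: "0 \<le> f H x" by (rule f_nonneg)
  have hp: "0 < real h" "0 < real H" using h by auto
  show ?thesis
  proof (cases "h = H")
    case True
    then show ?thesis using fH by (simp add: divide_right_mono)
  next
    case False
    then have hH: "h < H" using h by simp
    from rep_or_zero[OF h(1), of x] show ?thesis
    proof
      assume x: "x < real h \<or> (h = 1 \<and> x \<le> 1)"
      note R = ratio_rep[OF h(1) hH x]
      define D where "D = Lm (H-1) (1-x) - Lm (h-1) (1-x)"
      define r where "r = real H / real h"
      have r1: "1 \<le> r" unfolding r_def using h by simp
      have K: "r^3 * exp (-D) \<le> 2 * 10^15" using key_iii[OF h(1) hH Hx x] by (simp add: D_def r_def)
      have sr: "sqrt r \<le> r"
      proof -
        have "sqrt r \<le> sqrt (r^2)" using r1 by (intro real_sqrt_le_mono) (simp add: power2_eq_square)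
        then show ?thesis using r1 by simp
      qed
      have "f h x = (Am (h-1) / Am (H-1)) * exp (-D) * f H x" using R(1) by (simp add: D_def)
      also have "\<dots> \<le> (exp 1 * sqrt 2 * sqrt r) * exp (-D) * f H x"
        using R(2) fH by (intro mult_right_mono) (auto simp: r_def)
      also have "\<dots> \<le> (9/2 * r) * exp (-D) * f H x"
        using e_sqrt2 sr fH r1 by (intro mult_right_mono mult_mono) auto
      also have "\<dots> = 9/2 * (r^3 * exp (-D)) / r^2 * f H x"
        using r1 by (simp add: power2_eq_square power3_eq_cube)
      also have "\<dots> \<le> 9/2 * (2 * 10^15) / r^2 * f H x"
        using K fH r1 by (intro mult_right_mono divide_right_mono mult_left_mono) auto
      finally have "f h x \<le> 9 * 10^15 / r^2 * f H x" by simp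
      then have "f h x / (real h)^2 \<le> 9 * 10^15 / r^2 * f H x / (real h)^2"
        by (rule divide_right_mono) simp
      also have "\<dots> = 9 * 10^15 * f H x / (real H)^2" using hp unfolding r_def
        by (simp add: field_simps)
      also have "\<dots> \<le> 10^16 * f H x / (real H)^2"
        using fH hp by (intro divide_right_mono mult_right_mono) auto
      finally show ?thesis .
    next
      assume "f h x = 0" then show ?thesis using fH by simp
    qed
  qed
qed

lemma f_rep2:
  assumes n: "1 \<le> n" and x: "x < real n"
  shows "f n x = Am n * exp (real n * ln (1 - x / real n) + x) / (1 - x / real n)"
proof -
  have np: "0 < real n" using n by simp
  have y: "0 < 1 - x / real n" using x np by (simp add: field_simps)
  have fs: "fact n = real n * fact (n - 1)" using n by (metis Suc_diff_1 fact_Suc less_le_trans of_nat_Suc zero_less_one)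
  have ee: "exp (real n * ln (1 - x / real n)) = (1 - x / real n) ^ n"
    using y by (simp add: exp_of_nat_mult)
  have pw: "(real n - x) ^ n = (real n - x) * (real n - x) ^ (n - 1)" using n
    by (metis Suc_diff_1 less_le_trans power_Suc zero_less_one)
  have k: "exp (- real n) * exp x = 1 / exp (real n - x)" by (simp add: exp_diff exp_minus field_simps)
  have "Am n * exp (real n * ln (1 - x / real n) + x) / (1 - x / real n)
      = real n ^ n * (1 - x / real n) ^ n * (exp (- real n) * exp x) / (fact n * (1 - x / real n))"
    by (simp add: Am_def exp_add ee)
  also have "\<dots> = real n ^ n * (1 - x / real n) ^ n / (exp (real n - x) * (fact n * (1 - x / real n)))"
    unfolding k by simp
  also have "real n ^ n * (1 - x / real n) ^ n = (real n - x) ^ n"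
    using np by (simp add: power_mult_distrib[symmetric] field_simps)
  also have "(real n - x) ^ n / (exp (real n - x) * (fact n * (1 - x / real n)))
      = (real n - x) ^ (n - 1) / (exp (real n - x) * fact (n - 1))"
    unfolding fs pw using np y by (simp add: field_simps)
  also have "\<dots> = f n x" using x by (simp add: f_def)
  finally show ?thesis by simp
qed

lemma part_ii:
  assumes n: "1 \<le> n" and x: "\<bar>x\<bar> \<le> real n / 3"
  shows "(3 / (4 * exp 1)) / sqrt (real n) * exp (- (x^2) / real n) \<le> f n x"
    and "f n x \<le> (3/2) / sqrt (real n) * exp (- (x^2) / (3 * real n))"
proof -
  have np: "0 < real n" using n by simp
  have xl: "x < real n" using x np by linarith
  define v where "v = - x / real n"
  have v: "-1/3 \<le> v" "v \<le> 1/3" using x np unfolding v_def by (auto simp: field_simps abs_le_iff)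
  have e1: "real n * ln (1 - x / real n) + x = real n * (ln (1 + v) - v)"
    unfolding v_def using np by (simp add: field_simps)
  have vv: "real n * v^2 = x^2 / real n" unfolding v_def using np by (simp add: field_simps power2_eq_square)
  have lo: "v - v^2 \<le> ln (1 + v)" by (rule ln_ge_quad) (use v in auto)
  have hi: "ln (1 + v) \<le> v - v^2/3" by (rule ln_le_quad3) (use v in auto)
  have E1: "- (x^2) / real n \<le> real n * ln (1 - x / real n) + x"
  proof -
    have "real n * (-(v^2)) \<le> real n * (ln (1 + v) - v)" using lo np by (intro mult_left_mono) auto
    then show ?thesis using e1 vv by simp
  qed
  have E2: "real n * ln (1 - x / real n) + x \<le> - (x^2) / (3 * real n)"
  proof -
    have "real n * (ln (1 + v) - v) \<le> real n * (-(v^2)/3)" using hi np by (intro mult_left_mono) auto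
    moreover have "real n * (-(v^2)/3) = - (x^2) / (3 * real n)" using vv by (simp add: field_simps)
    ultimately show ?thesis using e1 by simp
  qed
  have w: "1 - x / real n = 1 + v" by (simp add: v_def)
  have w1: "2/3 \<le> 1 + v" "1 + v \<le> 4/3" using v by auto
  note rep = f_rep2[OF n xl, unfolded w]
  note A = Am_bounds1[OF n]
  have "(3 / (4 * exp 1)) / sqrt (real n) * exp (- (x^2) / real n)
      = (exp (-1) / sqrt (real n)) * exp (- (x^2) / real n) / (4/3)"
    by (simp add: exp_minus field_simps)
  also have "\<dots> \<le> Am n * exp (real n * ln (1 - x / real n) + x) / (1 + v)"
    using A(1) E1 w1 np Am_pos[of n] by (intro frac_le mult_mono) (auto simp: less_imp_le)
  finally show "(3 / (4 * exp 1)) / sqrt (real n) * exp (- (x^2) / real n) \<le> f n x"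
    using rep by (simp add: w)
  have "f n x = Am n * exp (real n * ln (1 - x / real n) + x) / (1 + v)" using rep by (simp add: w)
  also have "\<dots> \<le> (1 / sqrt (real n)) * exp (- (x^2) / (3 * real n)) / (2/3)"
    using A(2) E2 w1 np Am_pos[of n] by (intro frac_le mult_mono) auto
  also have "\<dots> = (3/2) / sqrt (real n) * exp (- (x^2) / (3 * real n))" by simp
  finally show "f n x \<le> (3/2) / sqrt (real n) * exp (- (x^2) / (3 * real n))" .
qed



lemma upow: fixes u :: real assumes "0 \<le> u" "u \<le> c" shows "u^(Suc k) \<le> c * u^k"
  using assms by (simp add: mult_right_mono)

lemma U2:
  fixes u w :: real
  assumes u0: "0 \<le> u" and u1: "u \<le> 2/19" and w: "w = u - 2/3*u^2 - 2*u^3"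
  shows "w^2/2 + w^3/3 + w^4/2 \<le> u^2/2 - u^3/3"
proof -
  have e: "u^2/2 - u^3/3 - (w^2/2 + w^3/3 + w^4/2) = (35/18)*u^4 + (14/9)*u^5 + (-154/81)*u^6 + (-284/27)*u^7 + (-332/81)*u^8 + (472/27)*u^9 + (32/3)*u^10 + (-32/3)*u^11 + (-8)*u^12"
    unfolding w by (simp add: field_simps eval_nat_numeral)
  have p4: "u^5 \<le> 2/19 * u^4" using upow[OF u0 u1, of 4] by (simp add: eval_nat_numeral)
  have p5: "u^6 \<le> 2/19 * u^5" using upow[OF u0 u1, of 5] by (simp add: eval_nat_numeral)
  have p6: "u^7 \<le> 2/19 * u^6" using upow[OF u0 u1, of 6] by (simp add: eval_nat_numeral)
  have p7: "u^8 \<le> 2/19 * u^7" using upow[OF u0 u1, of 7] by (simp add: eval_nat_numeral)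
  have p8: "u^9 \<le> 2/19 * u^8" using upow[OF u0 u1, of 8] by (simp add: eval_nat_numeral)
  have p9: "u^10 \<le> 2/19 * u^9" using upow[OF u0 u1, of 9] by (simp add: eval_nat_numeral)
  have p10: "u^11 \<le> 2/19 * u^10" using upow[OF u0 u1, of 10] by (simp add: eval_nat_numeral)
  have p11: "u^12 \<le> 2/19 * u^11" using upow[OF u0 u1, of 11] by (simp add: eval_nat_numeral)
  have q: "\<And>k. 0 \<le> u^k" using u0 by simp
  note P = p4 p5 p6 p7 p8 p9 p10 p11 q[of 4] q[of 5] q[of 6] q[of 7] q[of 8] q[of 9] q[of 10] q[of 11] q[of 12]
  from P have "0 \<le> (35/18)*u^4 + (14/9)*u^5 + (-154/81)*u^6 + (-284/27)*u^7 + (-332/81)*u^8 + (472/27)*u^9 + (32/3)*u^10 + (-32/3)*u^11 + (-8)*u^12"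
    by linarith
  with e show ?thesis by linarith
qed

lemma U3:
  fixes u w :: real
  assumes u0: "0 \<le> u" and u1: "u \<le> 2/19" and w: "w = u - 2/3*u^2 + 2*u^3"
  shows "u^2/2 - u^3/3 + u^4/4 \<le> w^2/2 + w^3/3"
proof -
  have e: "w^2/2 + w^3/3 - (u^2/2 - u^3/3 + u^4/4) = (47/36)*u^4 + (10/9)*u^5 + (-62/81)*u^6 + (44/9)*u^7 + (-8/3)*u^8 + (8/3)*u^9"
    unfolding w by (simp add: field_simps eval_nat_numeral)
  have p4: "u^5 \<le> 2/19 * u^4" using upow[OF u0 u1, of 4] by (simp add: eval_nat_numeral)
  have p5: "u^6 \<le> 2/19 * u^5" using upow[OF u0 u1, of 5] by (simp add: eval_nat_numeral)
  have p6: "u^7 \<le> 2/19 * u^6" using upow[OF u0 u1, of 6] by (simp add: eval_nat_numeral)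
  have p7: "u^8 \<le> 2/19 * u^7" using upow[OF u0 u1, of 7] by (simp add: eval_nat_numeral)
  have p8: "u^9 \<le> 2/19 * u^8" using upow[OF u0 u1, of 8] by (simp add: eval_nat_numeral)
  have q: "\<And>k. 0 \<le> u^k" using u0 by simp
  note P = p4 p5 p6 p7 p8 q[of 4] q[of 5] q[of 6] q[of 7] q[of 8] q[of 9]
  from P have "0 \<le> (47/36)*u^4 + (10/9)*u^5 + (-62/81)*u^6 + (44/9)*u^7 + (-8/3)*u^8 + (8/3)*u^9"
    by linarith
  with e show ?thesis by linarith
qed

lemma U1:
  fixes u w :: real
  assumes u0: "0 \<le> u" and u1: "u \<le> 2/19" and w: "w = 2/3*u"
  shows "w^2/2 + w^3/3 + w^4/2 \<le> u^2/2 - u^3/3"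
proof -
  have e: "u^2/2 - u^3/3 - (w^2/2 + w^3/3 + w^4/2) = (5/18)*u^2 + (-35/81)*u^3 + (-8/81)*u^4"
    unfolding w by (simp add: field_simps eval_nat_numeral)
  have p2: "u^3 \<le> 2/19 * u^2" using upow[OF u0 u1, of 2] by (simp add: eval_nat_numeral)
  have p3: "u^4 \<le> 2/19 * u^3" using upow[OF u0 u1, of 3] by (simp add: eval_nat_numeral)
  have q: "\<And>k. 0 \<le> u^k" using u0 by simp
  from p2 p3 q[of 2] q[of 3] q[of 4] have "0 \<le> (5/18)*u^2 + (-35/81)*u^3 + (-8/81)*u^4"
    by linarith
  with e show ?thesis by linarith
qed

lemma Lm_u: "1 \<le> m \<Longrightarrow> - real m < s \<Longrightarrow> Lm m s = real m * (ln (1 + s / real m) - s / real m)"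
proof -
  assume m: "1 \<le> m" and s: "- real m < s"
  have e1: "1 + s / real m = (real m + s) / real m" using m by (simp add: field_simps)
  have "ln (real m + s) - ln (real m) = ln (1 + s / real m)"
    unfolding e1 using m s by (simp add: ln_div)
  then show ?thesis using m unfolding Lm_def by (simp add: algebra_simps)
qed

lemma Lm_strict:
  assumes m: "1 \<le> m" and s: "- real m < s1" "s1 < s2" "s2 \<le> 0"
  shows "Lm m s1 < Lm m s2"
proof (rule DERIV_pos_imp_increasing_open[OF s(2)])
  fix r assume r: "s1 < r" "r < s2"
  have p: "0 < real m + r" using r s by simp
  have "1 < real m / (real m + r)" using p r s by (simp add: field_simps)
  then show "\<exists>y. ((\<lambda>r. Lm m r) has_real_derivative y) (at r) \<and> 0 < y"
    using Lm_deriv[OF p] by (intro exI[of _ "real m / (real m + r) - 1"]) auto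
next
  show "continuous_on {s1..s2} (Lm m)" using Lm_cont[of m s1 s2] s by auto
qed



lemma part_i_setup:
  assumes n: "20 \<le> n" and z: "0 \<le> z" "z \<le> real n / 10"
  shows "0 \<le> b n z \<and> b n z \<le> z \<and> Lm (n-1) (b n z - z) = Lm (n-1) z"
proof -
  define m where "m = n - 1"
  have m1: "19 \<le> m" using n by (simp add: m_def)
  have rm: "real m = real n - 1" using n by (simp add: m_def)
  have zm: "z < real m" using z rm n by simp
  have eq: "f n (1 - z) = f n (1 + z - y) \<longleftrightarrow> Lm m (y - z) = Lm m z" if y: "0 \<le> y" "y \<le> z" for y
  proof -
    have a: "f n (1 - z) = Am m * exp (Lm m z)"
      using f_rep[of n "1 - z"] n zm rm z by (simp add: m_def)
    have b: "f n (1 + z - y) = Am m * exp (Lm m (y - z))"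
      using f_rep[of n "1 + z - y"] n zm rm y by (simp add: m_def)
    show ?thesis unfolding a b using Am_pos[of m] by auto
  qed
  define u where "u = z / real m"
  have u: "0 \<le> u" "u \<le> 1/2" using z zm m1 rm unfolding u_def by (auto simp: field_simps)
  have Lz: "Lm m z = real m * (ln (1 + u) - u)" using Lm_u[of m z] m1 z by (simp add: u_def)
  have Lmz: "Lm m (-z) = real m * (ln (1 + (-u)) - (-u))" using Lm_u[of m "-z"] m1 zm by (simp add: u_def)
  have ex: "\<exists>y. 0 \<le> y \<and> y \<le> z \<and> Lm m (y - z) = Lm m z"
  proof (rule IVT')
    show "Lm m (0 - z) \<le> Lm m z"
    proof -
      have l1: "ln (1 + (-u)) \<le> (-u) - (-u)^2/2 + (-u)^3/3" by (rule ln_le_cubic) (use u in auto)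
      have l1': "ln (1 + (-u)) \<le> -u - u^2/2 - u^3/3" using l1 by (simp add: power_minus_odd)
      have l2: "u - u^2/2 + u^3/3 - u^4/4 \<le> ln (1 + u)" by (rule ln_ge_quartic) (use u in auto)
      have h4: "u^4 \<le> 1/2 * u^3" using upow[OF u(1) u(2), of 3] by (simp add: eval_nat_numeral)
      have h3: "0 \<le> u^3" using u by simp
      have "ln (1 + (-u)) - (-u) \<le> ln (1 + u) - u" using l1' l2 h4 h3 by linarith
      then have "real m * (ln (1 + (-u)) - (-u)) \<le> real m * (ln (1 + u) - u)" by (intro mult_left_mono) auto
      then show ?thesis using Lz Lmz by simp
    qed
    show "Lm m z \<le> Lm m (z - z)"
    proof -
      have "ln (1 + u) \<le> u" by (rule ln_add_one_self_le_self) (use u in auto)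
      then have "real m * (ln (1 + u) - u) \<le> 0" by (simp add: mult_nonneg_nonpos)
      then show ?thesis using Lz by simp
    qed
    show "continuous_on {0..z} (\<lambda>y. Lm m (y - z))"
      unfolding Lm_def using zm by (intro continuous_intros) auto
  qed (use z in auto)
  have uniq: "y1 = y2" if "0 \<le> y1" "y1 \<le> z" "Lm m (y1 - z) = Lm m z" "0 \<le> y2" "y2 \<le> z" "Lm m (y2 - z) = Lm m z" for y1 y2
  proof (rule ccontr)
    assume "y1 \<noteq> y2"
    then consider "y1 < y2" | "y2 < y1" by linarith
    then show False
    proof cases
      case 1 then have "Lm m (y1 - z) < Lm m (y2 - z)" using that zm m1 by (intro Lm_strict) auto
      then show False using that by simp
    next
      case 2 then have "Lm m (y2 - z) < Lm m (y1 - z)" using that zm m1 by (intro Lm_strict) auto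
      then show False using that by simp
    qed
  qed
  have "\<exists>!y. 0 \<le> y \<and> y \<le> z \<and> f n (1 - z) = f n (1 + z - y)"
  proof -
    from ex obtain y where y: "0 \<le> y" "y \<le> z" "Lm m (y - z) = Lm m z" by blast
    show ?thesis
    proof (rule ex1I[of _ y])
      show "0 \<le> y \<and> y \<le> z \<and> f n (1 - z) = f n (1 + z - y)" using y eq by auto
      fix y' assume "0 \<le> y' \<and> y' \<le> z \<and> f n (1 - z) = f n (1 + z - y')"
      then show "y' = y" using eq[of y'] uniq[of y' y] y by auto
    qed
  qed
  from theI'[OF this] have "0 \<le> b n z \<and> b n z \<le> z \<and> f n (1 - z) = f n (1 + z - b n z)"
    unfolding b_def .
  then show ?thesis using eq[of "b n z"] by (simp add: m_def)
qed



lemma part_i: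
  assumes n: "20 \<le> n" and z: "0 \<le> z" "z \<le> real n / 10"
  shows "b n z \<le> z / 3 \<and> \<bar>b n z - 2 * z^2 / (3 * (real n - 1))\<bar> \<le> 3 * z^3 / (real n)^2"
proof -
  define m where "m = n - 1"
  have m1: "19 \<le> m" using n by (simp add: m_def)
  have rm: "real m = real n - 1" using n by (simp add: m_def)
  have mp: "0 < real m" using m1 by simp
  have zm: "z < real m" using z rm n by simp
  note B = part_i_setup[OF n z, folded m_def]
  define u where "u = z / real m"
  have u: "0 \<le> u" "u \<le> 2/19" using z rm n mp unfolding u_def by (auto simp: field_simps)
  have Lz: "Lm m z = real m * (ln (1 + u) - u)" using Lm_u[of m z] m1 z by (simp add: u_def)
  have Lb: "Lm m (\<beta> - z) = real m * (ln (1 + (- ((z - \<beta>) / real m))) - (- ((z - \<beta>) / real m)))"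
    if "0 \<le> \<beta>" "\<beta> \<le> z" for \<beta>
    using Lm_u[of m "\<beta> - z"] m1 that zm by (simp add: field_simps)
  have cmp_le: "b n z \<le> \<beta>" if "0 \<le> \<beta>" "\<beta> \<le> z" "Lm m z \<le> Lm m (\<beta> - z)" for \<beta>
  proof (rule ccontr)
    assume "\<not> b n z \<le> \<beta>"
    then have "Lm m (\<beta> - z) < Lm m (b n z - z)" using that B zm m1 by (intro Lm_strict) auto
    then show False using B that by simp
  qed
  have cmp_ge: "\<beta> \<le> b n z" if "0 \<le> \<beta>" "\<beta> \<le> z" "Lm m (\<beta> - z) \<le> Lm m z" for \<beta>
  proof (rule ccontr)
    assume "\<not> \<beta> \<le> b n z"
    then have "Lm m (b n z - z) < Lm m (\<beta> - z)" using that B zm m1 by (intro Lm_strict) auto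
    then show False using B that by simp
  qed
  have UP: "b n z \<le> \<beta>" if b: "0 \<le> \<beta>" "\<beta> \<le> z"
      and P: "((z - \<beta>) / real m)^2/2 + ((z - \<beta>) / real m)^3/3 + ((z - \<beta>) / real m)^4/2 \<le> u^2/2 - u^3/3" for \<beta>
  proof (rule cmp_le[OF b])
    define w where "w = (z - \<beta>) / real m"
    have w: "0 \<le> w" "w \<le> 1/2" using b zm mp u unfolding w_def u_def by (auto simp: field_simps)
    have l1: "ln (1 + u) \<le> u - u^2/2 + u^3/3" by (rule ln_le_cubic) (use u in auto)
    have l2: "(-w) - (-w)^2/2 + (-w)^3/3 - (-w)^4/2 \<le> ln (1 + (-w))" by (rule ln_ge_quartic_neg) (use w in auto)
    have "ln (1 + u) - u \<le> ln (1 + (-w)) - (-w)" using l1 l2 P[folded w_def] by (simp add: power_minus_odd)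
    then have "real m * (ln (1 + u) - u) \<le> real m * (ln (1 + (-w)) - (-w))" using mp by (intro mult_left_mono) auto
    then show "Lm m z \<le> Lm m (\<beta> - z)" using Lz Lb[OF b] by (simp add: w_def)
  qed
  have DOWN: "\<beta> \<le> b n z" if b: "0 \<le> \<beta>" "\<beta> \<le> z"
      and P: "u^2/2 - u^3/3 + u^4/4 \<le> ((z - \<beta>) / real m)^2/2 + ((z - \<beta>) / real m)^3/3" for \<beta>
  proof (rule cmp_ge[OF b])
    define w where "w = (z - \<beta>) / real m"
    have w: "0 \<le> w" "w \<le> 1/2" using b zm mp u unfolding w_def u_def by (auto simp: field_simps)
    have l1: "ln (1 + (-w)) \<le> (-w) - (-w)^2/2 + (-w)^3/3" by (rule ln_le_cubic) (use w in auto)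
    have l2: "u - u^2/2 + u^3/3 - u^4/4 \<le> ln (1 + u)" by (rule ln_ge_quartic) (use u in auto)
    have "ln (1 + (-w)) - (-w) \<le> ln (1 + u) - u" using l1 l2 P[folded w_def] by (simp add: power_minus_odd)
    then have "real m * (ln (1 + (-w)) - (-w)) \<le> real m * (ln (1 + u) - u)" using mp by (intro mult_left_mono) auto
    then show "Lm m (\<beta> - z) \<le> Lm m z" using Lz Lb[OF b] by (simp add: w_def)
  qed
  define T where "T = 2 * z^2 / (3 * real m)"
  define E where "E = 2 * z^3 / (real m)^2"
  have T0: "0 \<le> T" "T \<le> z"
  proof -
    show "0 \<le> T" using z mp unfolding T_def by simp
    have "z * (z * 2) \<le> z * (real m * 3)" using z zm by (intro mult_left_mono) auto
    then show "T \<le> z" using mp unfolding T_def by (simp add: field_simps power2_eq_square)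
  qed
  have E0: "0 \<le> E" using z unfolding E_def by simp
  have third: "b n z \<le> z / 3"
  proof (rule UP)
    have "(z - z/3) / real m = 2/3 * u" by (simp add: u_def field_simps)
    then show "((z - z/3) / real m)^2/2 + ((z - z/3) / real m)^3/3 + ((z - z/3) / real m)^4/2 \<le> u^2/2 - u^3/3"
      using U1[OF u] by simp
  qed (use z in auto)
  have upper: "b n z \<le> T + E"
  proof (cases "z \<le> T + E")
    case True then show ?thesis using B by simp
  next
    case False
    show ?thesis
    proof (rule UP)
      have "(z - (T + E)) / real m = u - 2/3*u^2 - 2*u^3"
        unfolding T_def E_def u_def using mp by (simp add: field_simps eval_nat_numeral)
      then show "((z - (T + E)) / real m)^2/2 + ((z - (T + E)) / real m)^3/3 + ((z - (T + E)) / real m)^4/2 \<le> u^2/2 - u^3/3"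
        using U2[OF u] by simp
    qed (use False T0 E0 in auto)
  qed
  have lower: "T - E \<le> b n z"
  proof (cases "T - E \<le> 0")
    case True then show ?thesis using B by simp
  next
    case False
    show ?thesis
    proof (rule DOWN)
      have "(z - (T - E)) / real m = u - 2/3*u^2 + 2*u^3"
        unfolding T_def E_def u_def using mp by (simp add: field_simps eval_nat_numeral)
      then show "u^2/2 - u^3/3 + u^4/4 \<le> ((z - (T - E)) / real m)^2/2 + ((z - (T - E)) / real m)^3/3"
        using U3[OF u] by simp
    qed (use False T0 E0 in auto)
  qed
  have "E \<le> 3 * z^3 / (real n)^2"
  proof -
    have nb: "real n \<le> 6/5 * real m" using rm n by simp
    have "real n * real n \<le> (6/5 * real m) * (6/5 * real m)" by (rule mult_mono) (use nb in auto)
    then have "real n * real n \<le> 36/25 * (real m * real m)" by (simp add: algebra_simps)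
    moreover have "0 \<le> real m * real m" by simp
    ultimately have "2 * (real n * real n) \<le> 3 * (real m * real m)" by linarith
    then have "2 * (real n)^2 \<le> 3 * (real m)^2" by (simp add: power2_eq_square)
    then have "2 / (real m)^2 \<le> 3 / (real n)^2" using mp n by (simp add: field_simps)
    then have "2 / (real m)^2 * z^3 \<le> 3 / (real n)^2 * z^3" using z by (intro mult_right_mono) auto
    then show ?thesis unfolding E_def by simp
  qed
  moreover have "T = 2 * z^2 / (3 * (real n - 1))" unfolding T_def rm ..
  ultimately show ?thesis using third upper lower by (simp add: abs_le_iff)
qed

theorem lemma6:
  shows "\<exists>C::real. C > 0 \<and>
    (\<forall>(n::nat) (z::real). n \<ge> 20 \<and> 0 \<le> z \<and> z \<le> real n / 10 \<longrightarrow>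
        b n z \<le> z / 3 \<and>
        \<bar>b n z - 2 * z^2 / (3 * (real n - 1))\<bar> \<le> C * z^3 / (real n)^2) \<and>
    (\<forall>(n::nat) (x::real). n \<ge> 1 \<and> \<bar>x\<bar> \<le> real n / 3 \<longrightarrow>
        (1 / C) * (1 / sqrt (real n)) * exp (- (x^2) / real n) \<le> f n x \<and>
        f n x \<le> C * (1 / sqrt (real n)) * exp (- (x^2) / (3 * real n))) \<and>
    (\<forall>(x::real) (h::nat) (H::nat). 1 \<le> h \<and> h \<le> H \<and> real H \<le> 10 * x^2 \<longrightarrow>
        f h x / (real h)^2 \<le> C * f H x / (real H)^2) \<and>
    (\<forall>(k::nat) (n::nat) (x::real). 1 \<le> k \<and> k \<le> n \<longrightarrow>
        f k x \<le> C * sqrt (real n / real k) * f n x)"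
proof (intro exI[of _ "10^16"] conjI allI impI)
  show "(0::real) < 10^16" by simp
next
  fix n :: nat and z :: real
  assume a: "20 \<le> n \<and> 0 \<le> z \<and> z \<le> real n / 10"
  note P = part_i[of n z] a
  show "b n z \<le> z / 3" using P by auto
  have "3 * z^3 / (real n)^2 \<le> 10^16 * z^3 / (real n)^2"
    using a by (intro divide_right_mono mult_right_mono) auto
  then show "\<bar>b n z - 2 * z^2 / (3 * (real n - 1))\<bar> \<le> 10^16 * z^3 / (real n)^2"
    using P by auto
next
  fix n :: nat and x :: real
  assume a: "1 \<le> n \<and> \<bar>x\<bar> \<le> real n / 3"
  then have a1: "1 \<le> n" "\<bar>x\<bar> \<le> real n / 3" by auto
  note P = part_ii[OF a1]
  have sp: "0 < sqrt (real n)" using a1 by simp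
  have e3: "exp (1::real) \<le> 3" using exp_le by simp
  have "1 / (10^16::real) \<le> 3 / (4 * exp 1)" using e3 by (simp add: field_simps)
  then have "(1 / 10^16) * (1 / sqrt (real n)) * exp (- (x^2) / real n) \<le> (3 / (4 * exp 1)) * (1 / sqrt (real n)) * exp (- (x^2) / real n)"
    using sp by (intro mult_right_mono) auto
  then show "(1 / 10^16) * (1 / sqrt (real n)) * exp (- (x^2) / real n) \<le> f n x"
    using P(1) by simp
  have "(3/2) / sqrt (real n) * exp (- (x^2) / (3 * real n)) \<le> 10^16 * (1 / sqrt (real n)) * exp (- (x^2) / (3 * real n))"
    using sp by (intro mult_right_mono) (auto simp: field_simps)
  then show "f n x \<le> 10^16 * (1 / sqrt (real n)) * exp (- (x^2) / (3 * real n))"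
    using P(2) by simp
next
  fix x :: real and h H :: nat
  assume "1 \<le> h \<and> h \<le> H \<and> real H \<le> 10 * x^2"
  then show "f h x / (real h)^2 \<le> 10^16 * f H x / (real H)^2"
    using part_iii by auto
next
  fix k n :: nat and x :: real
  assume "1 \<le> k \<and> k \<le> n"
  then have "f k x \<le> 5 * sqrt (real n / real k) * f n x" using part_iv by auto
  also have "\<dots> \<le> 10^16 * sqrt (real n / real k) * f n x"
    using f_nonneg[of n x] by (intro mult_right_mono) auto
  finally show "f k x \<le> 10^16 * sqrt (real n / real k) * f n x" .
qed

end
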